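(* Assume the following two hypotheses. (Grimm's conjecture) For all integers $n\ge 1$ and $k\ge 1$ such that $n+1,\dots,n+k$ are all composite, there exist distinct primes $P_1,\dots,P_k$ with $P_i\mid (n+i)$ for $1\le i\le k$. (Smooth numbers in short intervals) For every $\varepsilon>0$ there is a constant $c_\varepsilon>0$ such that for all sufficiently large real $x$, $\Psi(x+x^{\varepsilon},x^{\varepsilon})-\Psi(x,x^{\varepsilon})\ge c_\varepsilon x^{\varepsilon}$. Then for every $\varepsilon>0$, $p_{i+1}-p_i<p_i^{\varepsilon}$ for all sufficiently large $i$.
   Context: $p_i$ denotes the $i$-th prime. For real $x,y$, $\Psi(x,y)$ denotes the number of positive integers $\le x$ all of whose prime factors are $\le y$. *)

theory Defs
  imports "HOL-Analysis.Analysis" "HOL-Computational_Algebra.Primes"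
begin

definition Psi :: "real \<Rightarrow> real \<Rightarrow> nat" where
  "Psi x y = card {m::nat. 1 \<le> m \<and> real m \<le> x \<and> (\<forall>p. prime p \<and> p dvd m \<longrightarrow> real p \<le> y)}"

text \<open>The i-th prime, 1-indexed: pr 1 = 2, pr 2 = 3, ...\<close>
definition pr :: "nat \<Rightarrow> nat" where
  "pr i = (THE p. prime p \<and> card {q::nat. prime q \<and> q \<le> p} = i)"

definition grimm_conjecture :: bool where
  "grimm_conjecture \<longleftrightarrow>
    (\<forall>n k::nat. n \<ge> 1 \<and> k \<ge> 1 \<and> (\<forall>i\<in>{1..k}. \<not> prime (n + i)) \<longrightarrow>
       (\<exists>P :: nat \<Rightarrow> nat. inj_on P {1..k} \<and> (\<forall>i\<in>{1..k}. prime (P i) \<and> P i dvd (n + i))))"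

definition smooth_short_intervals :: bool where
  "smooth_short_intervals \<longleftrightarrow>
    (\<forall>\<epsilon>::real. \<epsilon> > 0 \<longrightarrow> (\<exists>c>0. \<forall>\<^sub>F x in at_top.
       real (Psi (x + x powr \<epsilon>) (x powr \<epsilon>)) - real (Psi x (x powr \<epsilon>)) \<ge> c * x powr \<epsilon>))"

end

theory Submission
  imports Defs
begin

definition pic :: "nat \<Rightarrow> nat" where
  "pic n = card {q::nat. prime q \<and> q \<le> n}"

lemma pic_Suc: "pic (Suc n) = pic n + (if prime (Suc n) then 1 else 0)"
proof -
  have e: "{q::nat. prime q \<and> q \<le> Suc n} = {q. prime q \<and> q \<le> n} \<union> (if prime (Suc n) then {Suc n} else {})"
    by (auto simp: le_Suc_eq)
  have f: "finite {q::nat. prime q \<and> q \<le> n}" by simp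
  show ?thesis unfolding pic_def e using f by (auto simp: card_insert_if)
qed

lemma pic_0: "pic 0 = 0"
proof -
  have "{q::nat. prime q \<and> q \<le> 0} = {}" by auto
  thus ?thesis unfolding pic_def by simp
qed

lemma pic_mono: "m \<le> n \<Longrightarrow> pic m \<le> pic n"
  unfolding pic_def by (rule card_mono) auto

lemma pic_le: "pic n \<le> n"
proof -
  have "{q::nat. prime q \<and> q \<le> n} \<subseteq> {1..n}" using prime_ge_1_nat by auto
  hence "pic n \<le> card {1..n}" unfolding pic_def by (intro card_mono) auto
  thus ?thesis by simp
qed

lemma pic_prime_lt: assumes "prime p'" "p < p'" shows "pic p < pic p'"
proof -
  obtain n where n: "p' = Suc n" using assms prime_gt_0_nat by (cases p') auto
  have "pic p \<le> pic n" using assms n by (intro pic_mono) auto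
  thus ?thesis using pic_Suc[of n] assms n by simp
qed

lemma pic_unbounded: "\<exists>n. pic n \<ge> i"
proof (induction i)
  case 0 then show ?case by auto
next
  case (Suc i)
  then obtain n where "pic n \<ge> i" by auto
  obtain p where "prime p" "p > n" using bigger_prime by blast
  thus ?case using pic_prime_lt[of p n] \<open>pic n \<ge> i\<close> by (intro exI[of _ p]) auto
qed

lemma pic_exists: assumes "i \<ge> 1" shows "\<exists>p. prime p \<and> pic p = i"
proof -
  define n where "n = (LEAST n. pic n \<ge> i)"
  have n1: "pic n \<ge> i" unfolding n_def using pic_unbounded by (rule LeastI_ex)
  have "n \<noteq> 0"
  proof
    assume "n = 0" thus False using n1 assms pic_0 by simp
  qed
  then obtain n' where n': "n = Suc n'" by (cases n) auto
  have "\<not> pic n' \<ge> i"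
  proof
    assume "pic n' \<ge> i"
    hence "n \<le> n'" unfolding n_def by (rule Least_le)
    thus False using n' by simp
  qed
  thus ?thesis using n1 pic_Suc[of n'] n' by (intro exI[of _ n]) (auto split: if_splits)
qed

lemma pr_props: assumes "i \<ge> 1" shows "prime (pr i) \<and> pic (pr i) = i"
proof -
  obtain p where p: "prime p" "pic p = i" using pic_exists[OF assms] by blast
  have uniq: "\<And>p'. prime p' \<and> card {q::nat. prime q \<and> q \<le> p'} = i \<Longrightarrow> p' = p"
  proof -
    fix p' assume "prime p' \<and> card {q::nat. prime q \<and> q \<le> p'} = i"
    hence h: "prime p'" "pic p' = i" by (auto simp: pic_def)
    show "p' = p"
    proof (rule ccontr)
      assume "p' \<noteq> p"
      hence "p' < p \<or> p < p'" by auto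
      thus False using pic_prime_lt[of p p'] pic_prime_lt[of p' p] h p by auto
    qed
  qed
  have "pr i = p" unfolding pr_def
  proof (rule the_equality)
    show "prime p \<and> card {q::nat. prime q \<and> q \<le> p} = i" using p by (simp add: pic_def)
  next
    fix p' assume "prime p' \<and> card {q::nat. prime q \<and> q \<le> p'} = i"
    thus "p' = p" by (rule uniq)
  qed
  thus ?thesis using p by simp
qed

lemma pr_next: assumes "i \<ge> 1"
  shows "prime (pr i)" "prime (pr (i+1))" "pr i < pr (i+1)" "pr i \<ge> i"
    "\<And>r. pr i < r \<Longrightarrow> r < pr (i+1) \<Longrightarrow> \<not> prime r"
proof -
  have a: "prime (pr i)" "pic (pr i) = i" using pr_props assms by auto
  have b: "prime (pr (i+1))" "pic (pr (i+1)) = i+1" using pr_props assms by auto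
  show "prime (pr i)" "prime (pr (i+1))" using a b by auto
  show "pr i < pr (i+1)"
  proof (rule ccontr)
    assume "\<not> ?thesis"
    hence "pic (pr (i+1)) \<le> pic (pr i)" by (intro pic_mono) auto
    thus False using a b by simp
  qed
  show "pr i \<ge> i" using pic_le[of "pr i"] a by simp
  fix r assume r: "pr i < r" "r < pr (i+1)"
  show "\<not> prime r"
  proof
    assume "prime r"
    hence "pic (pr i) < pic r" "pic r < pic (pr (i+1))"
      using pic_prime_lt[OF \<open>prime r\<close> r(1)] pic_prime_lt[OF b(1) r(2)] by auto
    thus False using a b by simp
  qed
qed

definition smooth :: "real \<Rightarrow> nat \<Rightarrow> bool" where
  "smooth y m = (\<forall>p. prime p \<and> p dvd m \<longrightarrow> real p \<le> y)"

lemma Psi_alt: "Psi x y = card {m::nat. 1 \<le> m \<and> real m \<le> x \<and> smooth y m}"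
  by (simp add: Psi_def smooth_def)

lemma Psi_diff:
  assumes "x \<ge> 0" "h \<ge> 0"
  shows "real (Psi (x+h) y) - real (Psi x y)
         = real (card {s::nat. x < real s \<and> real s \<le> x+h \<and> smooth y s})"
proof -
  let ?A = "{m::nat. 1 \<le> m \<and> real m \<le> x \<and> smooth y m}"
  let ?B = "{m::nat. 1 \<le> m \<and> real m \<le> x+h \<and> smooth y m}"
  let ?C = "{s::nat. x < real s \<and> real s \<le> x+h \<and> smooth y s}"
  have fB: "finite ?B"
    by (rule finite_subset[of _ "{..nat \<lfloor>x+h\<rfloor>}"]) (auto simp: le_nat_floor)
  have eq: "?B = ?A \<union> ?C"
  proof (intro set_eqI iffI)
    fix s assume "s \<in> ?A \<union> ?C"
    thus "s \<in> ?B" using assms by (auto simp: not_less)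
  next
    fix s assume s: "s \<in> ?B"
    show "s \<in> ?A \<union> ?C"
    proof (cases "real s \<le> x")
      case True thus ?thesis using s by auto
    next
      case False
      hence "x < real s" by simp
      thus ?thesis using s by auto
    qed
  qed
  have "?A \<inter> ?C = {}" by auto
  moreover have "finite ?A" "finite ?C" using fB eq by (auto intro: finite_subset)
  ultimately have "card ?B = card ?A + card ?C" using eq card_Un_disjoint by metis
  thus ?thesis by (simp add: Psi_alt)
qed

lemma main:
  assumes G: "grimm_conjecture" and S: "smooth_short_intervals" and e: "\<epsilon> > 0"
  shows "\<exists>N::real. \<forall>p q::nat. prime p \<longrightarrow> prime q \<longrightarrow> p < q \<longrightarrow>
           (\<forall>r. p < r \<longrightarrow> r < q \<longrightarrow> \<not> prime r) \<longrightarrow> real p \<ge> N \<longrightarrow>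
           real q - real p < real p powr \<epsilon>"
proof -
  define \<delta> where "\<delta> = min \<epsilon> 1 / 2"
  have d0: "\<delta> > 0" and d1: "\<delta> \<le> 1/2" and d2: "2*\<delta> \<le> \<epsilon>" and d3: "2*\<delta> \<le> 1"
    unfolding \<delta>_def using e by auto
  obtain c where c0: "c > 0" and ev: "\<forall>\<^sub>F x in at_top.
       real (Psi (x + x powr \<delta>) (x powr \<delta>)) - real (Psi x (x powr \<delta>)) \<ge> c * x powr \<delta>"
    using S d0 unfolding smooth_short_intervals_def by blast
  obtain X0 where X0: "\<And>x. x \<ge> X0 \<Longrightarrow>
       real (Psi (x + x powr \<delta>) (x powr \<delta>)) - real (Psi x (x powr \<delta>)) \<ge> c * x powr \<delta>"
    using ev unfolding eventually_at_top_linorder by blast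
  define m :: nat where "m = nat \<lceil>4/c\<rceil>"
  have "real m \<ge> 4/c" unfolding m_def by linarith
  hence mc: "real m * c \<ge> 4" using c0 by (simp add: field_simps)
  define X1 where "X1 = real (2*m+1) powr (1/\<delta>)"
  show ?thesis
  proof (intro exI[of _ "max (max X0 X1) 1"] allI impI)
    fix p q :: nat
    assume pp: "prime p" and pq: "prime q" and lt: "p < q"
      and gap: "\<forall>r. p<r \<longrightarrow> r<q \<longrightarrow> \<not>prime r" and big: "max (max X0 X1) 1 \<le> real p"
    define P where "P = real p"
    have P1: "P \<ge> 1" "P \<ge> X0" "P \<ge> X1" using big P_def by auto
    have Pd: "P powr \<delta> \<ge> 2*m+1"
    proof -
      have "X1 powr \<delta> = real (2*m+1)" unfolding X1_def using d0 by (simp add: powr_powr)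
      moreover have "X1 powr \<delta> \<le> P powr \<delta>" using P1 d0 by (intro powr_mono2) (auto simp: X1_def)
      ultimately show ?thesis by simp
    qed
    have Pdpos: "P powr \<delta> \<ge> 1" using P1 d0 by (intro ge_one_powr_ge_zero) auto
    show "real q - real p < real p powr \<epsilon>"
    proof (rule ccontr)
      assume "\<not> ?thesis"
      hence qbig: "real q \<ge> P + P powr \<epsilon>" unfolding P_def by simp
      define L where "L = 2 * P powr \<delta>"
      define x where "x j = P + real j * L" for j :: nat
      define Sj where "Sj j = {s::nat. x j < real s \<and> real s \<le> x j + x j powr \<delta> \<and> smooth (x j powr \<delta>) s}" for j
      have L0: "L \<ge> 0" unfolding L_def by simp
      have sq: "P powr \<delta> * P powr \<delta> = P powr (2*\<delta>)" by (simp add: powr_add[symmetric])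
      have lt1: "real m * L < P powr (2*\<delta>)"
      proof -
        have "real m * L = (2*m) * P powr \<delta>" by (simp add: L_def)
        also have "\<dots> < P powr \<delta> * P powr \<delta>" using Pd Pdpos by (intro mult_strict_right_mono) auto
        finally show ?thesis using sq by simp
      qed
      have mL: "real m * L < P powr \<epsilon>"
        using lt1 powr_mono[OF d2 P1(1)] by linarith
      have mLP: "real m * L < P"
        using lt1 powr_mono[OF d3 P1(1)] P1 by simp
      have two: "(2::real) powr \<delta> \<le> 2" using powr_mono[of \<delta> 1 2] d1 by simp
      have xb: "x j powr \<delta> \<le> L \<and> x j powr \<delta> \<ge> P powr \<delta> \<and> x j \<ge> X0 \<and> x j \<ge> P
                \<and> x j + L \<le> P + real m * L" if j: "j < m" for j
      proof -
        have jL: "real j * L \<le> real m * L" using j L0 by (intro mult_right_mono) auto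
        have xP: "x j \<ge> P" unfolding x_def using L0 by simp
        have x2: "x j \<le> 2 * P" unfolding x_def using jL mLP by simp
        have "x j powr \<delta> \<le> (2*P) powr \<delta>" using x2 xP P1 d0 by (intro powr_mono2) auto
        also have "\<dots> = 2 powr \<delta> * P powr \<delta>" using P1 by (simp add: powr_mult)
        also have "\<dots> \<le> L" unfolding L_def using two by (intro mult_right_mono) auto
        finally have a: "x j powr \<delta> \<le> L" .
        have b: "x j powr \<delta> \<ge> P powr \<delta>" using xP P1 d0 by (intro powr_mono2) auto
        have "real (Suc j) * L \<le> real m * L" using j L0 by (intro mult_right_mono) auto
        hence "x j + L \<le> P + real m * L" unfolding x_def by (simp add: algebra_simps)
        thus ?thesis using a b xP P1 by auto
      qed
      have cardS: "real (card (Sj j)) \<ge> c * P powr \<delta>" if j: "j < m" for j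
      proof -
        have "real (card (Sj j)) = real (Psi (x j + x j powr \<delta>) (x j powr \<delta>)) - real (Psi (x j) (x j powr \<delta>))"
          unfolding Sj_def using xb[OF j] P1 by (subst Psi_diff) auto
        also have "\<dots> \<ge> c * x j powr \<delta>" using X0 xb[OF j] by auto
        moreover have "c * x j powr \<delta> \<ge> c * P powr \<delta>" using xb[OF j] c0 by auto
        ultimately show ?thesis by linarith
      qed
      have fin: "finite (Sj j)" if "j < m" for j
      proof (rule ccontr)
        assume "infinite (Sj j)"
        hence "card (Sj j) = 0" by simp
        thus False using cardS[OF that] c0 Pdpos by (smt (verit) mult_pos_pos of_nat_0)
      qed
      have disj: "Sj i \<inter> Sj j = {}" if "i < j" "j < m" for i j
      proof -
        have "real (Suc i) * L \<le> real j * L" using that L0 by (intro mult_right_mono) auto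
        hence "x i + L \<le> x j" unfolding x_def by (simp add: algebra_simps)
        thus ?thesis using xb[of i] that unfolding Sj_def by force
      qed
      define U where "U = (\<Union>j\<in>{..<m}. Sj j)"
      have cardU: "card U = (\<Sum>j<m. card (Sj j))" unfolding U_def
      proof (rule card_UN_disjoint)
        show "\<forall>i\<in>{..<m}. \<forall>j\<in>{..<m}. i \<noteq> j \<longrightarrow> Sj i \<inter> Sj j = {}"
          using disj by (metis Int_commute lessThan_iff linorder_neqE_nat)
      qed (use fin in auto)
      have "real (card U) = (\<Sum>j<m. real (card (Sj j)))" by (simp add: cardU)
      also have "\<dots> \<ge> (\<Sum>j<m. c * P powr \<delta>)" by (intro sum_mono cardS) auto
      ultimately have "real (card U) \<ge> real m * (c * P powr \<delta>)" by simp
      moreover have "real m * (c * P powr \<delta>) \<ge> 4 * P powr \<delta>"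
        using mc Pdpos by (simp add: mult.assoc[symmetric] mult_right_mono)
      ultimately have cU: "real (card U) \<ge> 4 * P powr \<delta>" by linarith
      have Urange: "p < s \<and> s < q \<and> (\<exists>j<m. smooth (x j powr \<delta>) s \<and> x j powr \<delta> \<le> L)" if "s \<in> U" for s
      proof -
        obtain j where j: "j < m" "s \<in> Sj j" using \<open>s \<in> U\<close> unfolding U_def by auto
        have h: "x j < real s" "real s \<le> x j + x j powr \<delta>" "smooth (x j powr \<delta>) s"
          using j unfolding Sj_def by auto
        have "P < real s" using h xb[OF j(1)] by linarith
        moreover have "real s < real q" using h xb[OF j(1)] mL qbig by linarith
        ultimately show ?thesis using h xb[OF j(1)] j unfolding P_def by auto
      qed
      have "card U > 0" using cU Pdpos by linarith
      then obtain s0 where s0: "s0 \<in> U" by (metis card_gt_0_iff ex_in_conv)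
      define k where "k = q - p - 1"
      have k1: "k \<ge> 1" using Urange[OF s0] unfolding k_def by auto
      have comp: "\<forall>i\<in>{1..k}. \<not> prime (p+i)" using gap unfolding k_def by auto
      have p1: "p \<ge> 1" using pp prime_ge_1_nat by blast
      obtain Pf where inj: "inj_on Pf {1..k}" and Pfp: "\<forall>i\<in>{1..k}. prime (Pf i) \<and> Pf i dvd (p+i)"
        using G comp k1 p1 unfolding grimm_conjecture_def by blast
      define g where "g s = Pf (s - p)" for s
      have rng: "s - p \<in> {1..k}" if "s \<in> U" for s using Urange[OF that] unfolding k_def by auto
      have ginj: "inj_on g U"
      proof (rule inj_onI)
        fix s t assume st: "s \<in> U" "t \<in> U" "g s = g t"
        hence "s - p = t - p" using inj rng unfolding g_def inj_on_def by blast
        moreover have "p < s" "p < t" using Urange[OF st(1)] Urange[OF st(2)] by auto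
        ultimately show "s = t" by arith
      qed
      have gsub: "g ` U \<subseteq> {..nat \<lfloor>L\<rfloor>}"
      proof
        fix r assume "r \<in> g ` U"
        then obtain s where s: "s \<in> U" "r = g s" by auto
        obtain j where j: "j < m" "smooth (x j powr \<delta>) s" "x j powr \<delta> \<le> L" using Urange[OF s(1)] by auto
        have "prime r \<and> r dvd p + (s - p)" using Pfp rng[OF s(1)] s(2) unfolding g_def by auto
        moreover have "p + (s - p) = s" using Urange[OF s(1)] by simp
        ultimately have "real r \<le> x j powr \<delta>" using j(2) unfolding smooth_def by auto
        thus "r \<in> {..nat \<lfloor>L\<rfloor>}" using j(3) by (auto intro: le_nat_floor)
      qed
      have "card U \<le> card {..nat \<lfloor>L\<rfloor>}" by (rule card_inj_on_le[OF ginj gsub]) auto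
      hence "real (card U) \<le> real (nat \<lfloor>L\<rfloor>) + 1" by simp
      moreover have "real (nat \<lfloor>L\<rfloor>) \<le> L" using L0 by linarith
      ultimately show False using cU Pdpos unfolding L_def by linarith
    qed
  qed
qed

theorem corollary1p1:
  assumes "grimm_conjecture"
    and "smooth_short_intervals"
  shows "\<forall>\<epsilon>::real. \<epsilon> > 0 \<longrightarrow>
           (\<forall>\<^sub>F i in at_top. real (pr (i + 1)) - real (pr i) < real (pr i) powr \<epsilon>)"
proof (intro allI impI)
  fix \<epsilon> :: real assume e: "\<epsilon> > 0"
  obtain N where N: "\<And>p q::nat. prime p \<Longrightarrow> prime q \<Longrightarrow> p < q \<Longrightarrow>
           (\<forall>r. p < r \<longrightarrow> r < q \<longrightarrow> \<not> prime r) \<Longrightarrow> real p \<ge> N \<Longrightarrow>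
           real q - real p < real p powr \<epsilon>"
    using main[OF assms e] by blast
  show "\<forall>\<^sub>F i in at_top. real (pr (i + 1)) - real (pr i) < real (pr i) powr \<epsilon>"
    unfolding eventually_at_top_linorder
  proof (intro exI[of _ "max 1 (nat \<lceil>N\<rceil>)"] allI impI)
    fix i assume i: "i \<ge> max 1 (nat \<lceil>N\<rceil>)"
    hence i1: "i \<ge> 1" by simp
    have "real (pr i) \<ge> N" using pr_next(4)[OF i1] i by linarith
    thus "real (pr (i + 1)) - real (pr i) < real (pr i) powr \<epsilon>"
      using N[OF pr_next(1,2,3)[OF i1]] pr_next(5)[OF i1] by blast
  qed
qed

end
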